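(* Let $\mathcal{C}$ be a finite set of classes and let $(\ell_\star, \ell_1, \dots, \ell_K)$ be a random tuple of $\mathcal{C}$-valued labels ($\ell_\star$ the oracle label, $\ell_i$ the label of annotator $i$) such that $\mathbb{P}(\ell_i = \ell_\star \mid \ell_j = \ell_\star) \ge \mathbb{P}(\ell_i = \ell_\star)$ for all $i, j \in \{1,\dots,K\}$ with $\mathbb{P}(\ell_j = \ell_\star) > 0$. Let $(\ell_\star^{(n)}, \ell_1^{(n)}, \dots, \ell_K^{(n)})$, $n = 1, \dots, N$, be $N$ independent copies of this tuple (labels on $N$ independently sampled data points), and define the empirical agreement ratios $$\mathbb{P}^{(N)}(\ell_i = \ell_j) = \frac{1}{N}\sum_{n=1}^N \big[\ell_i^{(n)} = \ell_j^{(n)}\big].$$ Then for every $t_u > 0$, with probability at least $1 - \delta_u$ where $\delta_u = \exp(-2 N t_u^2)$, $$\frac{1}{K}\sum_{i=1}^K \mathbb{P}(\ell_i = \ell_\star) \le \sqrt{t_u + \frac{1}{K^2}\sum_{i=1}^K\sum_{j=1}^K \mathbb{P}^{(N)}(\ell_i = \ell_j)}.$$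
   Context: $[\cdot]$ denotes the Iverson bracket (1 if the statement holds, 0 otherwise). $\frac{1}{K}\sum_{i}\mathbb{P}(\ell_i = \ell_\star)$ is the oracle accuracy of the average annotator (an annotator chosen uniformly at random among the $K$). *)

theory Defs
  imports "HOL-Probability.Probability"
begin

text \<open>Labels on data point n: oracle label star n, annotator i label lab n i.
  Index n = 0 is the generic random tuple; n = 1..N are the N copies.\<close>

definition label_space :: "nat \<Rightarrow> ('c \<times> (nat \<Rightarrow> 'c)) measure" where
  "label_space K = count_space UNIV \<Otimes>\<^sub>M PiM {1..K} (\<lambda>_. count_space UNIV)"

definition label_tuple ::
  "nat \<Rightarrow> (nat \<Rightarrow> 'a \<Rightarrow> 'c) \<Rightarrow> (nat \<Rightarrow> nat \<Rightarrow> 'a \<Rightarrow> 'c) \<Rightarrow> nat \<Rightarrow> 'a \<Rightarrow> 'c \<times> (nat \<Rightarrow> 'c)" where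
  "label_tuple K star lab n \<omega> = (star n \<omega>, \<lambda>i\<in>{1..K}. lab n i \<omega>)"

definition emp_agree :: "nat \<Rightarrow> (nat \<Rightarrow> nat \<Rightarrow> 'a \<Rightarrow> 'c) \<Rightarrow> nat \<Rightarrow> nat \<Rightarrow> 'a \<Rightarrow> real" where
  "emp_agree N lab i j \<omega> = (1 / real N) * (\<Sum>n=1..N. of_bool (lab n i \<omega> = lab n j \<omega>))"

end

theory Submission imports Defs begin

lemma T_meas:
  assumes star_meas: "\<And>n. star n \<in> measurable M (count_space UNIV)"
    and lab_meas: "\<And>n i. lab n i \<in> measurable M (count_space UNIV)"
  shows "label_tuple K star lab n \<in> measurable M (label_space K)"
  unfolding label_space_def label_tuple_def
  by (intro measurable_Pair measurable_restrict) (auto intro: star_meas lab_meas)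

definition fagree :: "nat \<Rightarrow> 'c \<times> (nat \<Rightarrow> 'c) \<Rightarrow> real" where
  "fagree K x = (1 / (real K)^2) * (\<Sum>i=1..K. \<Sum>j=1..K. of_bool (snd x i = snd x j))"

lemma f_meas: "fagree K \<in> borel_measurable (label_space (K::nat) :: ('c::countable \<times> _) measure)"
proof -
  have "(\<lambda>x::'c \<times> (nat \<Rightarrow> 'c). of_bool (snd x i = snd x j) :: real) \<in> borel_measurable (label_space K)"
    if "i \<in> {1..K}" "j \<in> {1..K}" for i j
  proof -
    have c: "\<And>i. i \<in> {1..K} \<Longrightarrow> (\<lambda>x::'c \<times> (nat \<Rightarrow> 'c). snd x i) \<in> measurable (label_space K) (count_space UNIV)"
      unfolding label_space_def
      by (rule measurable_compose[OF measurable_snd]) (rule measurable_component_singleton)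
    have A: "(\<lambda>x. (snd x i, snd x j)) \<in> measurable (label_space K) (count_space UNIV \<Otimes>\<^sub>M count_space (UNIV::'c set))"
      using c that by (intro measurable_Pair) auto
    have B: "(\<lambda>p::'c\<times>'c. of_bool (fst p = snd p) :: real) \<in> borel_measurable (count_space UNIV \<Otimes>\<^sub>M count_space UNIV)"
      by (simp add: pair_measure_countable)
    from measurable_compose[OF A B] show ?thesis by simp
  qed
  then show ?thesis unfolding fagree_def by (intro borel_measurable_times borel_measurable_sum) auto
qed

theorem theorem5:
  fixes M :: "'a measure" and N K :: nat
    and star :: "nat \<Rightarrow> 'a \<Rightarrow> 'c::finite"
    and lab :: "nat \<Rightarrow> nat \<Rightarrow> 'a \<Rightarrow> 'c"
    and t_u :: real
  assumes "prob_space M"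
    and star_meas: "\<And>n. star n \<in> measurable M (count_space UNIV)"
    and lab_meas: "\<And>n i. lab n i \<in> measurable M (count_space UNIV)"
    and pos_corr: "\<And>i j. i \<in> {1..K} \<Longrightarrow> j \<in> {1..K} \<Longrightarrow>
        measure M {\<omega> \<in> space M. lab 0 j \<omega> = star 0 \<omega>} > 0 \<Longrightarrow>
        measure M {\<omega> \<in> space M. lab 0 i \<omega> = star 0 \<omega> \<and> lab 0 j \<omega> = star 0 \<omega>}
          / measure M {\<omega> \<in> space M. lab 0 j \<omega> = star 0 \<omega>}
        \<ge> measure M {\<omega> \<in> space M. lab 0 i \<omega> = star 0 \<omega>}"
    and ident: "\<And>n. n \<in> {1..N} \<Longrightarrow>
        distr M (label_space K) (label_tuple K star lab n) = distr M (label_space K) (label_tuple K star lab 0)"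
    and indep: "prob_space.indep_vars M (\<lambda>_. label_space K) (label_tuple K star lab) {1..N}"
    and "t_u > 0"
  shows "measure M {\<omega> \<in> space M.
           (1 / real K) * (\<Sum>i=1..K. measure M {\<omega>' \<in> space M. lab 0 i \<omega>' = star 0 \<omega>'})
             \<le> sqrt (t_u + (1 / (real K)^2) * (\<Sum>i=1..K. \<Sum>j=1..K. emp_agree N lab i j \<omega>))}
         \<ge> 1 - exp (-2 * real N * t_u^2)"
proof -
  interpret P: prob_space M by fact
  note [measurable] = star_meas lab_meas
  define T where "T n = label_tuple K star lab n" for n
  define X where "X n \<omega> = fagree K (T n \<omega>)" for n \<omega>
  define p where "p i = measure M {\<omega> \<in> space M. lab 0 i \<omega> = star 0 \<omega>}" for i
  define E where "E i j = {\<omega> \<in> space M. lab 0 i \<omega> = lab 0 j \<omega>}" for i j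
  define \<mu> where "\<mu> = P.expectation (X 0)"
  define a where "a = (1 / real K) * (\<Sum>i=1..K. p i)"
  have Tm: "T n \<in> measurable M (label_space K)" for n
    unfolding T_def by (rule T_meas[OF star_meas lab_meas])
  have Xm[measurable]: "X n \<in> borel_measurable M" for n
    unfolding X_def using measurable_compose[OF Tm f_meas] by simp
  have Xeq: "X n \<omega> = (1 / (real K)^2) * (\<Sum>i=1..K. \<Sum>j=1..K. of_bool (lab n i \<omega> = lab n j \<omega>))" for n \<omega>
    unfolding X_def T_def fagree_def label_tuple_def
    by (intro arg_cong2[where f="(*)"] refl sum.cong) auto
  have Esets: "E i j \<in> sets M" for i j
    unfolding E_def by measurable
  have mu_eq: "\<mu> = (1 / (real K)^2) * (\<Sum>i=1..K. \<Sum>j=1..K. measure M (E i j))"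
  proof -
    have "\<mu> = integral\<^sup>L M (\<lambda>\<omega>. (1 / (real K)^2) * (\<Sum>i=1..K. \<Sum>j=1..K. indicator (E i j) \<omega>))"
      unfolding \<mu>_def by (intro Bochner_Integration.integral_cong refl) (auto simp: Xeq E_def indicator_def)
    also have "\<dots> = (1 / (real K)^2) * (\<Sum>i=1..K. \<Sum>j=1..K. measure M (E i j))"
      using Esets sets.sets_into_space[OF Esets]
      by (simp add: Bochner_Integration.integral_sum P.emeasure_finite Int_absorb2 less_top[symmetric])
    finally show ?thesis .
  qed
  have pp: "p i * p j \<le> measure M (E i j)" if "i \<in> {1..K}" "j \<in> {1..K}" for i j
  proof -
    have "p i * p j \<le> measure M {\<omega> \<in> space M. lab 0 i \<omega> = star 0 \<omega> \<and> lab 0 j \<omega> = star 0 \<omega>}"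
    proof (cases "p j > 0")
      case True
      then show ?thesis using pos_corr[OF that] unfolding p_def
        by (simp add: le_divide_eq)
    next
      case False
      then have "p j = 0" using measure_nonneg[of M] unfolding p_def by (metis less_eq_real_def)
      then show ?thesis by simp
    qed
    also have "\<dots> \<le> measure M (E i j)"
      unfolding E_def by (intro P.finite_measure_mono) (auto intro: Esets[unfolded E_def])
    finally show ?thesis .
  qed
  have a2: "a^2 \<le> \<mu>"
  proof -
    have "a^2 = (1 / (real K)^2) * (\<Sum>i=1..K. \<Sum>j=1..K. p i * p j)"
      unfolding a_def by (simp add: power2_eq_square sum_product)
    also have "\<dots> \<le> \<mu>"
      unfolding mu_eq by (intro mult_left_mono sum_mono pp) auto
    finally show ?thesis .
  qed
  have a0: "a \<ge> 0" unfolding a_def p_def by (intro mult_nonneg_nonneg sum_nonneg) auto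
  have Zeq: "(1 / (real K)^2) * (\<Sum>i=1..K. \<Sum>j=1..K. emp_agree N lab i j \<omega>)
      = (\<Sum>n\<in>{1..N}. X n \<omega>) / real (card {1..N})" for \<omega>
  proof -
    define b where "b n i j = (of_bool (lab n i \<omega> = lab n j \<omega>) :: real)" for n i j
    have sw: "(\<Sum>i=1..K. \<Sum>j=1..K. \<Sum>n=1..N. b n i j) = (\<Sum>n=1..N. \<Sum>i=1..K. \<Sum>j=1..K. b n i j)"
    proof -
      have "(\<Sum>i=1..K. \<Sum>j=1..K. \<Sum>n=1..N. b n i j) = (\<Sum>i=1..K. \<Sum>n=1..N. \<Sum>j=1..K. b n i j)"
        by (rule sum.cong[OF refl], rule sum.swap)
      also have "\<dots> = (\<Sum>n=1..N. \<Sum>i=1..K. \<Sum>j=1..K. b n i j)"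
        by (rule sum.swap)
      finally show ?thesis .
    qed
    have "(1 / (real K)^2) * (\<Sum>i=1..K. \<Sum>j=1..K. emp_agree N lab i j \<omega>)
        = (1 / (real K)^2) * (1 / real N) * (\<Sum>i=1..K. \<Sum>j=1..K. \<Sum>n=1..N. b n i j)"
      by (simp add: emp_agree_def b_def sum_distrib_left)
    also have "\<dots> = (1 / (real K)^2) * (1 / real N) * (\<Sum>n=1..N. \<Sum>i=1..K. \<Sum>j=1..K. b n i j)"
      by (simp only: sw)
    also have "\<dots> = (\<Sum>n\<in>{1..N}. X n \<omega>) / real (card {1..N})"
      by (simp add: Xeq b_def sum_distrib_left sum_divide_distrib mult_ac)
    finally show ?thesis .
  qed
  define S where "S = {\<omega> \<in> space M. (1 / real K) * (\<Sum>i=1..K. measure M {\<omega>' \<in> space M. lab 0 i \<omega>' = star 0 \<omega>'})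
             \<le> sqrt (t_u + (1 / (real K)^2) * (\<Sum>i=1..K. \<Sum>j=1..K. emp_agree N lab i j \<omega>))}"
  define B where "B = {\<omega> \<in> space M. (\<Sum>n\<in>{1..N}. X n \<omega>) / real (card {1..N}) \<le> \<mu> - t_u}"
  have S_eq: "S = {\<omega> \<in> space M. a \<le> sqrt (t_u + (\<Sum>n\<in>{1..N}. X n \<omega>) / real (card {1..N}))}"
    unfolding S_def Zeq a_def p_def ..
  have Ssets: "S \<in> sets M" unfolding S_eq by measurable
  have Bsets: "B \<in> sets M" unfolding B_def by measurable
  have sub: "space M - B \<subseteq> S"
  proof
    fix \<omega> assume w: "\<omega> \<in> space M - B"
    then have "a^2 \<le> t_u + (\<Sum>n\<in>{1..N}. X n \<omega>) / real (card {1..N})"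
      using a2 unfolding B_def by auto
    then have "sqrt (a^2) \<le> sqrt (t_u + (\<Sum>n\<in>{1..N}. X n \<omega>) / real (card {1..N}))"
      by (rule real_sqrt_le_mono)
    then show "\<omega> \<in> S" using w a0 unfolding S_eq by auto
  qed
  have PB: "P.prob B \<le> exp (-2 * real N * t_u^2)"
  proof (cases "N = 0")
    case True then show ?thesis by simp
  next
    case False
    have bnd: "X 0 \<omega> \<in> {0..1}" for \<omega>
    proof -
      have "(\<Sum>i=1..K. \<Sum>j=1..K. of_bool (lab 0 i \<omega> = lab 0 j \<omega>) :: real) \<le> (\<Sum>i=1..K. \<Sum>j=1..K. 1)"
        by (intro sum_mono) auto
      then have "(\<Sum>i=1..K. \<Sum>j=1..K. of_bool (lab 0 i \<omega> = lab 0 j \<omega>) :: real) \<le> (real K)^2"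
        by (simp add: power2_eq_square)
      moreover have "(\<Sum>i=1..K. \<Sum>j=1..K. of_bool (lab 0 i \<omega> = lab 0 j \<omega>) :: real) \<ge> 0"
        by (intro sum_nonneg) auto
      ultimately show ?thesis unfolding Xeq
        by (cases "K = 0") (auto simp: field_simps)
    qed
    interpret H: Hoeffding_ineq_iid M "{1..N}" X "X 0" 0 1 \<mu>
    proof unfold_locales
      show "P.indep_vars (\<lambda>_. borel) X {1..N}"
        unfolding X_def T_def
        by (rule P.indep_vars_compose2[OF indep]) (rule f_meas)
      fix n
      have dd: "distr M borel (X m) = distr (distr M (label_space K) (T m)) borel (fagree K)" for m
        using distr_distr[OF f_meas Tm, of m] by (simp add: X_def[abs_def] comp_def)
      assume "n \<in> {1..N}"
      then show "distr M borel (X n) = distr M borel (X 0)"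
        using ident[of n] unfolding dd T_def by simp
    qed (use bnd in \<open>auto simp: \<mu>_def intro!: AE_I2\<close>)
    have "P.prob B \<le> exp (- 2 * real (card {1..N}) * t_u\<^sup>2 / (1 - 0)\<^sup>2)"
      unfolding B_def using \<open>t_u > 0\<close> False by (intro H.Hoeffding_ineq_le') auto
    then show ?thesis by simp
  qed
  have "P.prob (space M - B) \<le> P.prob S"
    using sub Ssets by (intro P.finite_measure_mono) auto
  moreover have "P.prob (space M - B) = 1 - P.prob B"
    using Bsets by (rule P.prob_compl)
  ultimately show ?thesis using PB unfolding S_def by linarith
qed

end
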